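(* Let $N\geq 1$, let $J=\bigoplus_{k=1}^N\begin{bmatrix}0&1\\-1&0\end{bmatrix}$ be the $2N\times 2N$ symplectic form, let $V$ be any real symmetric $2N\times 2N$ matrix, and let $C$ be any complex $2N\times 2N$ matrix. Set $R_C\coloneqq \operatorname{Re}(C^\dagger C)$, $I_C\coloneqq \operatorname{Im}(C^\dagger C)$ (real and imaginary parts taken entrywise) and $\tilde V\coloneqq JV$. Then for every integer $l\geq 0$, $$2\operatorname{tr}\left[I_C J\tilde V^{2l+1}\right]+\operatorname{tr}\left[R_C J\tilde V^{2l}\right]=0,$$ where $\tilde V^{0}$ is the identity matrix.
   Context: In the paper, $V$ is the covariance matrix $V_{kl}=\frac12\langle\{\hat\xi_k,\hat\xi_l\}\rangle$ of an $N$-mode state with quadrature vector $\hat{\vec\xi}=(\hat x_1,\hat p_1,\dots,\hat x_N,\hat p_N)^T$, and $C$ is the matrix whose $k$-th row is the coefficient vector $\vec c_k\in\mathbb{C}^{2N}$ of a linear Lindblad operator $\hat L_k=\vec c_k\cdot\hat{\vec\xi}$. The quantities $2\operatorname{tr}(I_CJ\tilde V^k)+\operatorname{tr}(R_CJ\tilde V^{k-1})$, $k=1,\dots,2N$, are the expressions whose vanishing gives necessary conditions for stabilizability; the theorem says those with odd $k$ vanish identically. *)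

theory Defs
  imports "Jordan_Normal_Form.Matrix" Complex_Main
begin

text \<open>The 2N x 2N symplectic form J = direct sum of N copies of [[0,1],[-1,0]]
  (0-indexed: J(2k,2k+1) = 1, J(2k+1,2k) = -1, all other entries 0).\<close>
definition sympl_form :: "nat \<Rightarrow> real mat" where
  "sympl_form N = mat (2*N) (2*N) (\<lambda>(i,j).
     if even i \<and> j = i + 1 then 1
     else if odd i \<and> i = j + 1 then -1
     else 0)"

definition dagger :: "complex mat \<Rightarrow> complex mat" where
  "dagger C = transpose_mat (map_mat cnj C)"

definition mat_trace :: "'a::comm_monoid_add mat \<Rightarrow> 'a" where
  "mat_trace A = (\<Sum>i<dim_row A. A $$ (i,i))"

end

theory Submission
  imports "Jordan_Normal_Form.Matrix" Defs
begin

lemma J_carrier: "sympl_form N \<in> carrier_mat (2*N) (2*N)"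
  unfolding sympl_form_def by auto

definition pp :: "nat \<Rightarrow> nat" where "pp i = (if even i then i+1 else i-1)"
definition ss :: "nat \<Rightarrow> real" where "ss i = (if even i then 1 else -1)"

lemma J_entry: "i < 2*N \<Longrightarrow> j < 2*N \<Longrightarrow> sympl_form N $$ (i,j) = (if j = pp i then ss i else 0)"
  unfolding sympl_form_def pp_def ss_def by (auto elim!: oddE; presburger)

lemma pp_lt: "i < 2*N \<Longrightarrow> pp i < 2*N"
  unfolding pp_def by (auto elim!: evenE)

lemma J_transpose: "transpose_mat (sympl_form N) = - sympl_form N"
  by (rule eq_matI) (auto simp: sympl_form_def elim!: oddE evenE)

lemma J_sq: "sympl_form N * sympl_form N = - 1\<^sub>m (2*N)"
proof (rule eq_matI)
  fix i j assume ij: "i < dim_row (- 1\<^sub>m (2*N))" "j < dim_col (- 1\<^sub>m (2*N) :: real mat)"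
  hence i: "i < 2*N" and j: "j < 2*N" by auto
  have "(sympl_form N * sympl_form N) $$ (i,j) = (\<Sum>k<2*N. sympl_form N $$ (i,k) * sympl_form N $$ (k,j))"
    using i j J_carrier[of N] by (simp add: scalar_prod_def atLeast0LessThan)
  also have "\<dots> = (\<Sum>k<2*N. if k = pp i then ss i * sympl_form N $$ (k,j) else 0)"
    by (rule sum.cong) (use i j in \<open>auto simp: J_entry\<close>)
  also have "\<dots> = ss i * sympl_form N $$ (pp i, j)"
    using pp_lt[OF i] by (simp add: sum.delta)
  also have "\<dots> = (if i = j then -1 else 0)"
    using pp_lt[OF i] j by (auto simp: J_entry pp_def ss_def)
  finally show "(sympl_form N * sympl_form N) $$ (i,j) = (- 1\<^sub>m (2*N)) $$ (i,j)"
    using i j by simp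
qed (auto simp: sympl_form_def)


lemma neg_one_mult: "(P::real mat) \<in> carrier_mat n k \<Longrightarrow> - 1\<^sub>m n * P = - P"
  using uminus_mult_left_mat[of "1\<^sub>m n" P] by (simp add: carrier_matD)

lemma mult_neg: "(A::real mat) \<in> carrier_mat m n \<Longrightarrow> (P::real mat) \<in> carrier_mat n k \<Longrightarrow> A * - P = - (A * P)"
  using uminus_mult_right_mat[of A P] by (simp add: carrier_matD)

lemma neg_mult: "(A::real mat) \<in> carrier_mat m n \<Longrightarrow> (P::real mat) \<in> carrier_mat n k \<Longrightarrow> - A * P = - (A * P)"
  using uminus_mult_left_mat[of A P] by (simp add: carrier_matD)

lemma pow_comm: "T \<in> carrier_mat n n \<Longrightarrow> T * T ^\<^sub>m m = T ^\<^sub>m m * T"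
proof (induction m)
  case 0 then show ?case by simp
next
  case (Suc m)
  have "T * T ^\<^sub>m Suc m = (T * T ^\<^sub>m m) * T"
    using assoc_mult_mat[OF Suc.prems pow_carrier_mat[OF Suc.prems] Suc.prems, of m] by simp
  also have "\<dots> = T ^\<^sub>m Suc m * T" using Suc by simp
  finally show ?case .
qed

lemma pow_transpose:
  fixes J V :: "real mat"
  assumes J: "J \<in> carrier_mat n n" and V: "V \<in> carrier_mat n n"
    and Vs: "transpose_mat V = V" and Ja: "transpose_mat J = - J" and JJ: "J * J = - 1\<^sub>m n"
  shows "transpose_mat (J * (J*V) ^\<^sub>m m) = (if even m then - (J * (J*V) ^\<^sub>m m) else J * (J*V) ^\<^sub>m m)"
proof (induction m)
  case 0 then show ?case using J Ja by simp
next
  case (Suc m)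
  let ?T = "J*V"
  have T: "?T \<in> carrier_mat n n" using J V by simp
  have P: "?T ^\<^sub>m m \<in> carrier_mat n n" using T by simp
  have JP: "J * ?T ^\<^sub>m m \<in> carrier_mat n n" using J P by simp
  have e1: "J * ?T ^\<^sub>m Suc m = (J * ?T ^\<^sub>m m) * ?T" using assoc_mult_mat[OF J P T] by simp
  have tT: "transpose_mat ?T = - (V * J)" using J V Vs Ja by (simp add: transpose_mult[OF J V])
  have e2: "transpose_mat (J * ?T ^\<^sub>m Suc m) = - (V * J) * transpose_mat (J * ?T ^\<^sub>m m)"
    unfolding e1 using transpose_mult[OF JP T] tT by simp
  have e3: "(V * J) * (J * ?T ^\<^sub>m m) = - (V * ?T ^\<^sub>m m)"
  proof -
    have "(V * J) * (J * ?T ^\<^sub>m m) = V * ((J * J) * ?T ^\<^sub>m m)"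
      using assoc_mult_mat[OF V J JP] assoc_mult_mat[OF J J P] by simp
    also have "\<dots> = - (V * ?T ^\<^sub>m m)" using JJ V P by (simp add: neg_one_mult mult_neg)
    finally show ?thesis .
  qed
  have e4: "J * ?T ^\<^sub>m Suc m = - (V * ?T ^\<^sub>m m)"
  proof -
    have "J * ?T ^\<^sub>m Suc m = J * (?T * ?T ^\<^sub>m m)" using pow_comm[OF T, of m] by simp
    also have "\<dots> = (J * J) * (V * ?T ^\<^sub>m m)"
      using assoc_mult_mat[OF J J V] assoc_mult_mat[OF J V P] assoc_mult_mat[OF J T P] assoc_mult_mat[OF J J mult_carrier_mat[OF V P]] by simp
    also have "\<dots> = - (V * ?T ^\<^sub>m m)" using JJ V P by (simp add: neg_one_mult mult_neg)
    finally show ?thesis .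
  qed
  have VJ: "V * J \<in> carrier_mat n n" using V J by simp
  show ?case
  proof (cases "even m")
    case True
    then have "transpose_mat (J * ?T ^\<^sub>m Suc m) = - (V * J) * - (J * ?T ^\<^sub>m m)"
      using e2 Suc.IH by simp
    also have "\<dots> = (V * J) * (J * ?T ^\<^sub>m m)" using VJ JP by (simp add: neg_mult mult_neg)
    finally show ?thesis using True e3 e4 by simp
  next
    case False
    then have "transpose_mat (J * ?T ^\<^sub>m Suc m) = - (V * J) * (J * ?T ^\<^sub>m m)"
      using e2 Suc.IH by simp
    also have "\<dots> = - ((V * J) * (J * ?T ^\<^sub>m m))" using VJ JP by (simp add: neg_mult mult_neg)
    finally show ?thesis using False e3 e4 by simp
  qed
qed



lemma trace_sym_anti:
  fixes A B :: "real mat"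
  assumes A: "A \<in> carrier_mat n n" and B: "B \<in> carrier_mat n n"
    and h: "\<And>i k. i < n \<Longrightarrow> k < n \<Longrightarrow> A $$ (i,k) * B $$ (k,i) = - (A $$ (k,i) * B $$ (i,k))"
  shows "mat_trace (A * B) = 0"
proof -
  define S where "S = (\<Sum>i<n. \<Sum>k<n. A $$ (i,k) * B $$ (k,i))"
  have tr: "mat_trace (A * B) = S"
  proof -
    have "mat_trace (A * B) = (\<Sum>i<n. (A * B) $$ (i,i))"
      unfolding mat_trace_def using A B by (simp add: carrier_matD)
    also have "\<dots> = S" unfolding S_def
      by (intro sum.cong refl) (use A B in \<open>simp add: scalar_prod_def atLeast0LessThan carrier_matD\<close>)
    finally show ?thesis .
  qed
  have "S = (\<Sum>i<n. \<Sum>k<n. - (A $$ (k,i) * B $$ (i,k)))"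
    unfolding S_def by (intro sum.cong refl) (auto intro!: h)
  also have "\<dots> = - (\<Sum>i<n. \<Sum>k<n. A $$ (k,i) * B $$ (i,k))"
    by (simp only: sum_negf)
  also have "(\<Sum>i<n. \<Sum>k<n. A $$ (k,i) * B $$ (i,k)) = S"
    unfolding S_def by (rule sum.swap)
  finally have "S = - S" .
  then show ?thesis using tr by simp
qed


lemma herm_entry:
  assumes C: "C \<in> carrier_mat n n" and i: "i < n" and j: "j < n"
  shows "(dagger C * C) $$ (j,i) = cnj ((dagger C * C) $$ (i,j))"
proof -
  have "(dagger C * C) $$ (j,i) = (\<Sum>k<n. cnj (C $$ (k,j)) * C $$ (k,i))"
    using C i j unfolding dagger_def by (simp add: scalar_prod_def atLeast0LessThan carrier_matD)
  moreover have "(dagger C * C) $$ (i,j) = (\<Sum>k<n. cnj (C $$ (k,i)) * C $$ (k,j))"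
    using C i j unfolding dagger_def by (simp add: scalar_prod_def atLeast0LessThan carrier_matD)
  ultimately show ?thesis by (simp add: mult.commute)
qed


theorem theorem1:
  fixes N l :: nat and V :: "real mat" and C :: "complex mat"
  assumes "N \<ge> 1"
    and "V \<in> carrier_mat (2*N) (2*N)" and "transpose_mat V = V"
    and "C \<in> carrier_mat (2*N) (2*N)"
  shows "2 * mat_trace (map_mat Im (dagger C * C) * sympl_form N * (sympl_form N * V) ^\<^sub>m (2*l+1))
         + mat_trace (map_mat Re (dagger C * C) * sympl_form N * (sympl_form N * V) ^\<^sub>m (2*l)) = 0"
proof -
  let ?n = "2*N"
  let ?J = "sympl_form N"
  let ?T = "?J * V"
  let ?M = "dagger C * C"
  have J: "?J \<in> carrier_mat ?n ?n" by (rule J_carrier)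
  have V: "V \<in> carrier_mat ?n ?n" by fact
  have C: "C \<in> carrier_mat ?n ?n" by fact
  have T: "?T \<in> carrier_mat ?n ?n" using J V by simp
  have M: "?M \<in> carrier_mat ?n ?n" using C unfolding dagger_def by auto
  have R: "map_mat Re ?M \<in> carrier_mat ?n ?n" and I: "map_mat Im ?M \<in> carrier_mat ?n ?n" using M by auto
  have PT: "\<And>m. transpose_mat (?J * ?T ^\<^sub>m m) = (if even m then - (?J * ?T ^\<^sub>m m) else ?J * ?T ^\<^sub>m m)"
    by (rule pow_transpose[OF J V assms(3) J_transpose J_sq])
  have B: "\<And>m. ?J * ?T ^\<^sub>m m \<in> carrier_mat ?n ?n" using J T by simp
  have Bent: "\<And>m i k. i < ?n \<Longrightarrow> k < ?n \<Longrightarrow> (?J * ?T ^\<^sub>m m) $$ (k,i) =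
     (if even m then - ((?J * ?T ^\<^sub>m m) $$ (i,k)) else (?J * ?T ^\<^sub>m m) $$ (i,k))"
  proof -
    fix m i k assume i: "i < ?n" and k: "k < ?n"
    have "(?J * ?T ^\<^sub>m m) $$ (k,i) = transpose_mat (?J * ?T ^\<^sub>m m) $$ (i,k)"
      using carrier_matD[OF B[of m]] i k by simp
    also have "\<dots> = (if even m then - ((?J * ?T ^\<^sub>m m) $$ (i,k)) else (?J * ?T ^\<^sub>m m) $$ (i,k))"
      unfolding PT using carrier_matD[OF B[of m]] i k by simp
    finally show "(?J * ?T ^\<^sub>m m) $$ (k,i) =
     (if even m then - ((?J * ?T ^\<^sub>m m) $$ (i,k)) else (?J * ?T ^\<^sub>m m) $$ (i,k))" .
  qed
  have Ment: "\<And>i k. i < ?n \<Longrightarrow> k < ?n \<Longrightarrow> ?M $$ (k,i) = cnj (?M $$ (i,k))"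
    using herm_entry[OF C] by blast
  have t1: "mat_trace (map_mat Im ?M * (?J * ?T ^\<^sub>m (2*l+1))) = 0"
  proof (rule trace_sym_anti[OF I B])
    fix i k assume i: "i < ?n" and k: "k < ?n"
    show "map_mat Im ?M $$ (i,k) * (?J * ?T ^\<^sub>m (2*l+1)) $$ (k,i) =
      - (map_mat Im ?M $$ (k,i) * (?J * ?T ^\<^sub>m (2*l+1)) $$ (i,k))"
      using Bent[OF i k, of "2*l+1"] Ment[OF i k] carrier_matD[OF M] i k by (simp del: pow_mat.simps)
  qed
  have t2: "mat_trace (map_mat Re ?M * (?J * ?T ^\<^sub>m (2*l))) = 0"
  proof (rule trace_sym_anti[OF R B])
    fix i k assume i: "i < ?n" and k: "k < ?n"
    show "map_mat Re ?M $$ (i,k) * (?J * ?T ^\<^sub>m (2*l)) $$ (k,i) =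
      - (map_mat Re ?M $$ (k,i) * (?J * ?T ^\<^sub>m (2*l)) $$ (i,k))"
      using Bent[OF i k, of "2*l"] Ment[OF i k] carrier_matD[OF M] i k by (simp del: pow_mat.simps)
  qed
  have a1: "map_mat Im ?M * ?J * ?T ^\<^sub>m (2*l+1) = map_mat Im ?M * (?J * ?T ^\<^sub>m (2*l+1))"
    using assoc_mult_mat[OF I J pow_carrier_mat[OF T]] .
  have a2: "map_mat Re ?M * ?J * ?T ^\<^sub>m (2*l) = map_mat Re ?M * (?J * ?T ^\<^sub>m (2*l))"
    using assoc_mult_mat[OF R J pow_carrier_mat[OF T]] .
  show ?thesis unfolding a1 a2 t1 t2 by simp
qed

end
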